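(* Let $S$ be a T2R semigroup, with $S=S_0\cup S_1$ as in the definition, and let $b\in S$ be an element such that $|J_b|=2$ and $I(b)=\{0\}$. Then for every $x,y\in S^1$, either $0\notin xJ_by$ or $xJ_by=\{0\}$. Moreover, $J_bS_0=S_0J_b=\{0\}$, and either $S_1J_b=\{0\}$ or $S_1J_b=J_b$.
   Context: A semigroup $S$ is a $\Delta$-semigroup if the lattice of all congruences of $S$ is a chain with respect to inclusion. A semigroup $N$ with zero $0$ is nil if every element has some power equal to $0$; non-trivial means having more than one element. A T2R semigroup is a $\Delta$-semigroup $S$ which is the disjoint union of a non-trivial nil ideal $S_0$ (with zero $0$, which is then the zero of $S$) and a subsemigroup $S_1$ which is a two-element right zero semigroup (i.e. $S_1=\{u,v\}$ with $xy=y$ for $x,y\in S_1$). $S^1$ denotes $S$ with an identity $1$ adjoined. For $a\in S$: $J(a)=S^1aS^1$, $J_a=\{s\in S:J(s)=J(a)\}$, $I(a)=J(a)\setminus J_a$. Products of elements with sets are taken elementwise, e.g. $xAy=\{xay:a\in A\}$, $AB=\{ab: a\in A, b\in B\}$. *)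

theory Defs
  imports Main
begin

definition semigroup_on :: "'a set \<Rightarrow> ('a \<Rightarrow> 'a \<Rightarrow> 'a) \<Rightarrow> bool" where
  "semigroup_on S m \<longleftrightarrow> (\<forall>x\<in>S. \<forall>y\<in>S. m x y \<in> S) \<and>
     (\<forall>x\<in>S. \<forall>y\<in>S. \<forall>z\<in>S. m (m x y) z = m x (m y z))"

definition congruence_on :: "'a set \<Rightarrow> ('a \<Rightarrow> 'a \<Rightarrow> 'a) \<Rightarrow> 'a rel \<Rightarrow> bool" where
  "congruence_on S m r \<longleftrightarrow> equiv S r \<and>
     (\<forall>a\<in>S. \<forall>b\<in>S. \<forall>c\<in>S. (a, b) \<in> r \<longrightarrow> (m c a, m c b) \<in> r \<and> (m a c, m b c) \<in> r)"

definition delta_semigroup :: "'a set \<Rightarrow> ('a \<Rightarrow> 'a \<Rightarrow> 'a) \<Rightarrow> bool" where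
  "delta_semigroup S m \<longleftrightarrow> semigroup_on S m \<and>
     (\<forall>r1 r2. congruence_on S m r1 \<longrightarrow> congruence_on S m r2 \<longrightarrow> r1 \<subseteq> r2 \<or> r2 \<subseteq> r1)"

text \<open>Positive powers: spow m a n = a^(n+1).\<close>
fun spow :: "('a \<Rightarrow> 'a \<Rightarrow> 'a) \<Rightarrow> 'a \<Rightarrow> nat \<Rightarrow> 'a" where
  "spow m a 0 = a"
| "spow m a (Suc n) = m (spow m a n) a"

definition T2R :: "'a set \<Rightarrow> ('a \<Rightarrow> 'a \<Rightarrow> 'a) \<Rightarrow> 'a set \<Rightarrow> 'a set \<Rightarrow> 'a \<Rightarrow> bool" where
  "T2R S m S0 S1 z \<longleftrightarrow> delta_semigroup S m \<and>
     S = S0 \<union> S1 \<and> S0 \<inter> S1 = {} \<and>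
     (\<forall>s\<in>S. \<forall>a\<in>S0. m s a \<in> S0 \<and> m a s \<in> S0) \<and>
     z \<in> S0 \<and> (\<forall>a\<in>S0. m z a = z \<and> m a z = z) \<and>
     (\<forall>a\<in>S0. \<exists>n. spow m a n = z) \<and>
     (\<exists>a\<in>S0. a \<noteq> z) \<and>
     (\<exists>u v. u \<noteq> v \<and> S1 = {u, v}) \<and>
     (\<forall>x\<in>S1. \<forall>y\<in>S1. m x y = y)"

text \<open>S^1 is modelled by 'a option, None being the adjoined identity.\<close>
definition S1adj :: "'a set \<Rightarrow> 'a option set" where
  "S1adj S = insert None (Some ` S)"

fun lmul :: "('a \<Rightarrow> 'a \<Rightarrow> 'a) \<Rightarrow> 'a option \<Rightarrow> 'a \<Rightarrow> 'a" where
  "lmul m None a = a"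
| "lmul m (Some x) a = m x a"

fun rmul :: "('a \<Rightarrow> 'a \<Rightarrow> 'a) \<Rightarrow> 'a \<Rightarrow> 'a option \<Rightarrow> 'a" where
  "rmul m a None = a"
| "rmul m a (Some y) = m a y"

definition triple_prod :: "('a \<Rightarrow> 'a \<Rightarrow> 'a) \<Rightarrow> 'a option \<Rightarrow> 'a set \<Rightarrow> 'a option \<Rightarrow> 'a set" where
  "triple_prod m x A y = {rmul m (lmul m x a) y | a. a \<in> A}"

definition set_prod :: "('a \<Rightarrow> 'a \<Rightarrow> 'a) \<Rightarrow> 'a set \<Rightarrow> 'a set \<Rightarrow> 'a set" where
  "set_prod m A B = {m a b | a b. a \<in> A \<and> b \<in> B}"

definition Jideal :: "'a set \<Rightarrow> ('a \<Rightarrow> 'a \<Rightarrow> 'a) \<Rightarrow> 'a \<Rightarrow> 'a set" where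
  "Jideal S m a = {rmul m (lmul m x a) y | x y. x \<in> S1adj S \<and> y \<in> S1adj S}"

definition Jclass :: "'a set \<Rightarrow> ('a \<Rightarrow> 'a \<Rightarrow> 'a) \<Rightarrow> 'a \<Rightarrow> 'a set" where
  "Jclass S m a = {s \<in> S. Jideal S m s = Jideal S m a}"

definition Iideal :: "'a set \<Rightarrow> ('a \<Rightarrow> 'a \<Rightarrow> 'a) \<Rightarrow> 'a \<Rightarrow> 'a set" where
  "Iideal S m a = Jideal S m a - Jclass S m a"

end

theory Submission
  imports Defs
begin

locale t2r =
  fixes S :: "'a set" and m :: "'a \<Rightarrow> 'a \<Rightarrow> 'a" and S0 S1 :: "'a set" and z u v :: 'a
  assumes T: "T2R S m S0 S1 z" and uv: "u \<noteq> v" and S1eq: "S1 = {u,v}"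
begin

lemma closed: "x\<in>S \<Longrightarrow> y\<in>S \<Longrightarrow> m x y \<in> S"
  using T by (auto simp: T2R_def delta_semigroup_def semigroup_on_def)
lemma assoc: "x\<in>S \<Longrightarrow> y\<in>S \<Longrightarrow> w\<in>S \<Longrightarrow> m (m x y) w = m x (m y w)"
  using T by (auto simp: T2R_def delta_semigroup_def semigroup_on_def)
lemma Seq: "S = S0 \<union> {u,v}" using T S1eq by (auto simp: T2R_def)
lemma disj: "u \<notin> S0" "v \<notin> S0" using T S1eq by (auto simp: T2R_def)
lemma ideal: "s\<in>S \<Longrightarrow> a\<in>S0 \<Longrightarrow> m s a \<in> S0 \<and> m a s \<in> S0"
  using T by (auto simp: T2R_def)
lemma zS0: "z\<in>S0" using T by (auto simp: T2R_def)
lemma zl: "a\<in>S0 \<Longrightarrow> m z a = z" using T by (auto simp: T2R_def)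
lemma zr: "a\<in>S0 \<Longrightarrow> m a z = z" using T by (auto simp: T2R_def)
lemma nil: "a\<in>S0 \<Longrightarrow> \<exists>n. spow m a n = z" using T by (auto simp: T2R_def)
lemma rz: "x\<in>{u,v} \<Longrightarrow> y\<in>{u,v} \<Longrightarrow> m x y = y" using T S1eq by (auto simp: T2R_def)
lemma S0S: "a \<in> S0 \<Longrightarrow> a \<in> S" using Seq by auto
lemma uS: "u \<in> S" "v \<in> S" using Seq by auto

lemma zero: assumes "s\<in>S" shows "m z s = z \<and> m s z = z"
proof (cases "s \<in> S0")
  case True then show ?thesis using zl zr by auto
next
  case False
  hence s: "s \<in> {u,v}" using assms Seq by auto
  have zS: "z \<in> S" using zS0 S0S by auto
  have a: "m z s \<in> S0" "m s z \<in> S0" using ideal[OF assms zS0] by auto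
  have "m z (m z s) = z" using zl a by auto
  moreover have "m z (m z s) = m (m z z) s" using assoc zS assms by auto
  moreover have "m z z = z" using zl zS0 by auto
  moreover have "m (m s z) z = z" using zr a by auto
  moreover have "m (m s z) z = m s (m z z)" using assoc zS assms by auto
  ultimately show ?thesis by auto
qed

lemma rnorm: "x\<in>{u,v} \<Longrightarrow> y\<in>{u,v} \<Longrightarrow> w\<in>S \<Longrightarrow> m x (m y w) = m y w"
  using assoc[of x y w] rz[of x y] uS by auto

lemma spow_in: "g \<in> S \<Longrightarrow> spow m g n \<in> S"
  by (induction n) (auto simp: closed)

lemma spow_left: "g \<in> S \<Longrightarrow> m g (spow m g n) = spow m g (Suc n)"
proof (induction n)
  case 0 then show ?case by simp
next
  case (Suc n)
  have "m g (spow m g (Suc n)) = m g (m (spow m g n) g)" by simp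
  also have "\<dots> = m (m g (spow m g n)) g" using assoc[OF Suc.prems spow_in[OF Suc.prems] Suc.prems] by simp
  also have "\<dots> = spow m g (Suc (Suc n))" using Suc by simp
  finally show ?case .
qed

lemma adj_cases: "x \<in> S1adj S \<Longrightarrow> x = None \<or> (\<exists>a\<in>S0. x = Some a) \<or> x = Some u \<or> x = Some v"
  using Seq by (auto simp: S1adj_def)

lemma lmul_in: "x \<in> S1adj S \<Longrightarrow> w \<in> S \<Longrightarrow> lmul m x w \<in> S"
  by (auto simp: S1adj_def closed)
lemma rmul_in: "y \<in> S1adj S \<Longrightarrow> w \<in> S \<Longrightarrow> rmul m w y \<in> S"
  by (auto simp: S1adj_def closed)
lemma lr_comm: "x \<in> S1adj S \<Longrightarrow> y \<in> S1adj S \<Longrightarrow> w \<in> S \<Longrightarrow>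
   rmul m (lmul m x w) y = lmul m x (rmul m w y)"
  by (auto simp: S1adj_def assoc)
lemma rmul_z: "y \<in> S1adj S \<Longrightarrow> rmul m z y = z"
  using zero by (auto simp: S1adj_def)
lemma lmul_z: "y \<in> S1adj S \<Longrightarrow> lmul m y z = z"
  using zero by (auto simp: S1adj_def)

end


locale t2rb = t2r +
  fixes b :: 'a
  assumes bS: "b \<in> S" and II: "Iideal S m b = {z}"
begin

abbreviation "K \<equiv> Jclass S m b"

lemma None_adj: "None \<in> S1adj S" by (simp add: S1adj_def)
lemma Some_adj: "a \<in> S \<Longrightarrow> Some a \<in> S1adj S" by (simp add: S1adj_def)

lemma inJ: "s \<in> S \<Longrightarrow> s \<in> Jideal S m s"
  unfolding Jideal_def using None_adj by force

lemma bK: "b \<in> K" using bS by (simp add: Jclass_def)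

lemma K_S: "s \<in> K \<Longrightarrow> s \<in> S \<and> Jideal S m s = Jideal S m b"
  by (simp add: Jclass_def)

lemma zK: "z \<notin> K" using II by (auto simp: Iideal_def)

lemma Kne: "s \<in> K \<Longrightarrow> s \<noteq> z" using zK by auto

lemma Jsub: "Jideal S m b \<subseteq> insert z K" using II by (auto simp: Iideal_def)

lemma K2: assumes "s \<in> K" "x \<in> S1adj S" "y \<in> S1adj S"
  shows "rmul m (lmul m x s) y \<in> insert z K"
proof -
  have "rmul m (lmul m x s) y \<in> Jideal S m s" unfolding Jideal_def using assms by blast
  then show ?thesis using K_S[OF assms(1)] Jsub by auto
qed

lemma K3: assumes "s \<in> K" "t \<in> K"
  shows "\<exists>p\<in>S1adj S. \<exists>q\<in>S1adj S. s = rmul m (lmul m p t) q"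
proof -
  have "s \<in> Jideal S m t" using inJ K_S assms by metis
  then show ?thesis unfolding Jideal_def by blast
qed

lemma part2a: assumes s: "s \<in> K" and a: "a \<in> S0" shows "m s a = z"
proof (rule ccontr)
  assume ne: "m s a \<noteq> z"
  have sS: "s \<in> S" using K_S s by auto
  have aS: "a \<in> S" using S0S a by auto
  have "rmul m (lmul m None s) (Some a) \<in> insert z K" using K2[OF s None_adj Some_adj[OF aS]] .
  hence wK: "m s a \<in> K" using ne by simp
  obtain p q where p: "p \<in> S1adj S" and q: "q \<in> S1adj S" and sd: "s = rmul m (lmul m p (m s a)) q"
    using K3[OF s wK] by blast
  define g where "g = rmul m a q"
  have gS0: "g \<in> S0" using q a ideal unfolding g_def by (auto simp: S1adj_def)
  have gS: "g \<in> S" using gS0 S0S by auto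
  have key: "rmul m (lmul m p (m s a)) q = m (lmul m p s) g"
  proof -
    have l: "lmul m p (m s a) = m (lmul m p s) a" using p sS aS by (auto simp: S1adj_def assoc)
    show ?thesis using q l unfolding g_def
      using assoc[OF lmul_in[OF p sS] aS] by (auto simp: S1adj_def)
  qed
  have sg: "s = m (lmul m p s) g" using sd key by simp
  have "\<forall>n. \<exists>w\<in>S. s = m w (spow m g n)"
  proof
    fix n show "\<exists>w\<in>S. s = m w (spow m g n)"
    proof (induction n)
      case 0 then show ?case using sg lmul_in[OF p sS] by auto
    next
      case (Suc n)
      then obtain w where w: "w \<in> S" "s = m w (spow m g n)" by blast
      have "lmul m p s = m (lmul m p w) (spow m g n)"
        using w p spow_in[OF gS] by (auto simp: S1adj_def assoc)
      hence "s = m (m (lmul m p w) (spow m g n)) g" using sg by simp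
      also have "\<dots> = m (lmul m p w) (spow m g (Suc n))"
        using assoc[OF lmul_in[OF p w(1)] spow_in[OF gS] gS] by simp
      finally show ?case using lmul_in[OF p w(1)] by blast
    qed
  qed
  moreover obtain n where "spow m g n = z" using nil gS0 by blast
  ultimately obtain w where "w \<in> S" "s = m w z" by metis
  hence "s = z" using zero by auto
  thus False using Kne s by auto
qed

lemma part2b: assumes s: "s \<in> K" and a: "a \<in> S0" shows "m a s = z"
proof (rule ccontr)
  assume ne: "m a s \<noteq> z"
  have sS: "s \<in> S" using K_S s by auto
  have aS: "a \<in> S" using S0S a by auto
  have "rmul m (lmul m (Some a) s) None \<in> insert z K" using K2[OF s Some_adj[OF aS] None_adj] .
  hence wK: "m a s \<in> K" using ne by simp
  obtain p q where p: "p \<in> S1adj S" and q: "q \<in> S1adj S" and sd: "s = rmul m (lmul m p (m a s)) q"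
    using K3[OF s wK] by blast
  define g where "g = lmul m p a"
  have gS0: "g \<in> S0" using p a ideal unfolding g_def by (auto simp: S1adj_def)
  have gS: "g \<in> S" using gS0 S0S by auto
  have key: "rmul m (lmul m p (m a s)) q = m g (rmul m s q)"
  proof -
    have l: "lmul m p (m a s) = m g s" using p sS aS unfolding g_def by (auto simp: S1adj_def assoc)
    show ?thesis using q l using assoc[OF gS sS] by (auto simp: S1adj_def)
  qed
  have sg: "s = m g (rmul m s q)" using sd key by simp
  have "\<forall>n. \<exists>w\<in>S. s = m (spow m g n) w"
  proof
    fix n show "\<exists>w\<in>S. s = m (spow m g n) w"
    proof (induction n)
      case 0 then show ?case using sg rmul_in[OF q sS] by auto
    next
      case (Suc n)
      then obtain w where w: "w \<in> S" "s = m (spow m g n) w" by blast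
      have "rmul m s q = m (spow m g n) (rmul m w q)"
        using w q spow_in[OF gS] by (auto simp: S1adj_def assoc)
      hence "s = m g (m (spow m g n) (rmul m w q))" using sg by simp
      also have "\<dots> = m (m g (spow m g n)) (rmul m w q)"
        using assoc[OF gS spow_in[OF gS] rmul_in[OF q w(1)]] by simp
      also have "\<dots> = m (spow m g (Suc n)) (rmul m w q)" using spow_left[OF gS] by simp
      finally show ?case using rmul_in[OF q w(1)] by blast
    qed
  qed
  moreover obtain n where "spow m g n = z" using nil gS0 by blast
  ultimately obtain w where "w \<in> S" "s = m z w" by metis
  hence "s = z" using zero by auto
  thus False using Kne s by auto
qed


lemma ident: assumes "x \<in> {None, Some u, Some v}" "y \<in> {None, Some u, Some v}"
   "p \<in> {None, Some u, Some v}" "q \<in> {None, Some u, Some v}" "t \<in> S"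
   shows "rmul m (rmul m (lmul m x (rmul m (lmul m p (rmul m (lmul m x t) y)) q)) y) q
        = rmul m (lmul m p (rmul m (lmul m x t) y)) q"
  using assms uS by (auto simp: assoc closed rz rnorm)

lemma adjT: "x \<in> S1adj S \<Longrightarrow> (\<exists>a\<in>S0. x = Some a) \<or> x \<in> {None, Some u, Some v}"
  using adj_cases by blast

lemma part1: assumes s: "s \<in> K" and t: "t \<in> K" and x: "x \<in> S1adj S" and y: "y \<in> S1adj S"
  and ne: "rmul m (lmul m x t) y \<noteq> z"
  shows "rmul m (lmul m x s) y \<noteq> z"
proof -
  have tS: "t \<in> S" using K_S t by auto
  have sS: "s \<in> S" using K_S s by auto
  have xT: "x \<in> {None, Some u, Some v}"
  proof -
    { fix a assume a: "a \<in> S0" "x = Some a"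
      hence "rmul m (lmul m x t) y = z" using part2b[OF t a(1)] rmul_z[OF y] by simp
      with ne have False by simp }
    thus ?thesis using adjT[OF x] by blast
  qed
  have yT: "y \<in> {None, Some u, Some v}"
  proof -
    { fix a assume a: "a \<in> S0" "y = Some a"
      have "rmul m (lmul m x t) None \<in> insert z K" using K2[OF t x None_adj] .
      hence "lmul m x t \<in> insert z K" by simp
      hence "m (lmul m x t) a = z" using part2a a zl zS0 zero S0S by auto
      hence "rmul m (lmul m x t) y = z" using a by simp
      with ne have False by simp }
    thus ?thesis using adjT[OF y] by blast
  qed
  have wK: "rmul m (lmul m x t) y \<in> K" using K2[OF t x y] ne by auto
  obtain p q where p: "p \<in> S1adj S" and q: "q \<in> S1adj S"
    and sd: "s = rmul m (lmul m p (rmul m (lmul m x t) y)) q"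
    using K3[OF s wK] by blast
  have pT: "p \<in> {None, Some u, Some v}"
  proof -
    { fix a assume a: "a \<in> S0" "p = Some a"
      hence "s = z" using sd part2b[OF wK a(1)] rmul_z[OF q] by simp
      hence False using Kne s by simp }
    thus ?thesis using adjT[OF p] by blast
  qed
  have qT: "q \<in> {None, Some u, Some v}"
  proof -
    { fix a assume a: "a \<in> S0" "q = Some a"
      have "rmul m (lmul m p (rmul m (lmul m x t) y)) None \<in> insert z K" using K2[OF wK p None_adj] .
      hence "lmul m p (rmul m (lmul m x t) y) \<in> insert z K" by simp
      hence "m (lmul m p (rmul m (lmul m x t) y)) a = z" using part2a a zl zS0 zero S0S by auto
      hence "s = z" using a sd by simp
      hence False using Kne s by simp }
    thus ?thesis using adjT[OF q] by blast
  qed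
  have "rmul m (rmul m (lmul m x s) y) q = s" using ident[OF xT yT pT qT tS] sd by simp
  show ?thesis
  proof
    assume "rmul m (lmul m x s) y = z"
    hence "s = z" using \<open>rmul m (rmul m (lmul m x s) y) q = s\<close> rmul_z[OF q] by simp
    thus False using Kne s by simp
  qed
qed


lemma fixed_spread: assumes s: "s \<in> K" and fu: "m u s = s" and fv: "m v s = s" and s': "s' \<in> K"
  shows "m u s' = s' \<and> m v s' = s'"
proof -
  have sS: "s \<in> S" using K_S s by auto
  obtain p q where p: "p \<in> S1adj S" and q: "q \<in> S1adj S" and sd: "s' = rmul m (lmul m p s) q"
    using K3[OF s' s] by blast
  have pT: "p \<in> {None, Some u, Some v}"
  proof -
    { fix a assume a: "a \<in> S0" "p = Some a"
      hence "s' = z" using sd part2b[OF s a(1)] rmul_z[OF q] by simp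
      hence False using Kne s' by simp }
    thus ?thesis using adjT[OF p] by blast
  qed
  hence "lmul m p s = s" using fu fv by auto
  hence sd2: "s' = rmul m s q" using sd by simp
  have "m u s' = rmul m (m u s) q" "m v s' = rmul m (m v s) q"
    using sd2 q sS uS by (auto simp: S1adj_def assoc)
  thus ?thesis using fu fv sd2 by simp
qed

lemma part3: assumes g: "g \<in> {u,v}" and s: "s \<in> K" and ne: "m g s \<noteq> z"
  shows "\<forall>s'\<in>K. m u s' = s' \<and> m v s' = s'"
proof -
  have sS: "s \<in> S" using K_S s by auto
  have gS: "g \<in> S" using g uS by auto
  have "rmul m (lmul m (Some g) s) None \<in> insert z K" using K2[OF s Some_adj[OF gS] None_adj] .
  hence wK: "m g s \<in> K" using ne by simp
  obtain p q where p: "p \<in> S1adj S" and q: "q \<in> S1adj S" and sd: "s = rmul m (lmul m p (m g s)) q"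
    using K3[OF s wK] by blast
  have pT: "p \<in> {None, Some u, Some v}"
  proof -
    { fix a assume a: "a \<in> S0" "p = Some a"
      hence "s = z" using sd part2b[OF wK a(1)] rmul_z[OF q] by simp
      hence False using Kne s by simp }
    thus ?thesis using adjT[OF p] by blast
  qed
  hence "lmul m p (m g s) = m g s" using g sS rnorm by auto
  hence "s = rmul m (m g s) q" using sd by simp
  also have "\<dots> = m g (rmul m s q)" using q gS sS by (auto simp: S1adj_def assoc)
  finally have s2: "s = m g (rmul m s q)" .
  have rS: "rmul m s q \<in> S" using rmul_in[OF q sS] .
  have "m u s = s" "m v s = s" using s2 rnorm[OF _ g rS] by (metis insertI1 insertI2 singletonI)+
  thus ?thesis using fixed_spread[OF s] by blast
qed

end


theorem proposition2:
  fixes S S0 S1 :: "'a set" and m :: "'a \<Rightarrow> 'a \<Rightarrow> 'a" and z b :: 'a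
  assumes "T2R S m S0 S1 z"
    and "b \<in> S"
    and "card (Jclass S m b) = 2"
    and "Iideal S m b = {z}"
  shows "(\<forall>x\<in>S1adj S. \<forall>y\<in>S1adj S.
            z \<notin> triple_prod m x (Jclass S m b) y \<or> triple_prod m x (Jclass S m b) y = {z})
       \<and> set_prod m (Jclass S m b) S0 = {z}
       \<and> set_prod m S0 (Jclass S m b) = {z}
       \<and> (set_prod m S1 (Jclass S m b) = {z} \<or> set_prod m S1 (Jclass S m b) = Jclass S m b)"
proof -
  obtain u v where uv0: "u \<noteq> v" "S1 = {u,v}" using assms(1) by (auto simp: T2R_def)
  interpret t2rb S m S0 S1 z u v b
    by unfold_locales (use assms uv0 in auto)
  have A: "\<forall>x\<in>S1adj S. \<forall>y\<in>S1adj S.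
            z \<notin> triple_prod m x K y \<or> triple_prod m x K y = {z}"
  proof (intro ballI)
    fix x y assume x: "x \<in> S1adj S" and y: "y \<in> S1adj S"
    show "z \<notin> triple_prod m x K y \<or> triple_prod m x K y = {z}"
    proof (cases "z \<in> triple_prod m x K y")
      case True
      then obtain s where s: "s \<in> K" "rmul m (lmul m x s) y = z" unfolding triple_prod_def by auto
      have "\<forall>t\<in>K. rmul m (lmul m x t) y = z" using part1[OF s(1) _ x y] s(2) by blast
      hence "triple_prod m x K y = {z}" using bK unfolding triple_prod_def by auto
      thus ?thesis by simp
    qed simp
  qed
  have B: "set_prod m K S0 = {z}"
    using part2a bK zS0 zero bS unfolding set_prod_def by fastforce
  have C: "set_prod m S0 K = {z}"
    using part2b bK zS0 zero bS unfolding set_prod_def by fastforce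
  have D: "set_prod m S1 K = {z} \<or> set_prod m S1 K = K"
  proof (cases "\<exists>g\<in>{u,v}. \<exists>s\<in>K. m g s \<noteq> z")
    case True
    then obtain g s where "g \<in> {u,v}" "s \<in> K" "m g s \<noteq> z" by blast
    hence fx: "\<forall>s'\<in>K. m u s' = s' \<and> m v s' = s'" using part3 by blast
    have "set_prod m S1 K = K" unfolding set_prod_def uv0(2)
    proof (rule set_eqI, rule iffI)
      fix w assume "w \<in> {m a c |a c. a \<in> {u, v} \<and> c \<in> K}"
      thus "w \<in> K" using fx by auto
    next
      fix w assume "w \<in> K"
      thus "w \<in> {m a c |a c. a \<in> {u, v} \<and> c \<in> K}" using fx by force
    qed
    thus ?thesis by simp
  next
    case False
    hence "set_prod m S1 K = {z}" unfolding set_prod_def uv0(2) using bK by (auto, metis)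
    thus ?thesis by simp
  qed
  show ?thesis using A B C D by blast
qed

end
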